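(* Let $(\Omega,\mathcal F)$ be a measurable space, $w$ a capacity, $X$ a bounded measurable function, and $\alpha\in(0,1)$. Then $$\big[\mathrm{VaR}^w_\alpha(X),\overline{\mathrm{VaR}}^w_\alpha(X)\big]=\operatorname*{argmin}_{x\in\mathbb R}\Big\{x+\frac1\alpha\int(X-x)_+\,\mathrm dw\Big\},\qquad \mathrm{ES}^w_\alpha(X)=\min_{x\in\mathbb R}\Big\{x+\frac1\alpha\int(X-x)_+\,\mathrm dw\Big\}.$$
   Context: A capacity is an increasing function $w:\mathcal F\to\mathbb R$ with $w(\varnothing)=0$, $w(\Omega)=1$. For a bounded measurable $Y$, $\int Y\,\mathrm dw=\int_{-\infty}^0(w(Y\ge y)-1)\,\mathrm dy+\int_0^\infty w(Y\ge y)\,\mathrm dy$ (Choquet integral). $\mathrm{VaR}^w_t(X)=\inf\{x\in\mathbb R:w(X\ge x)\le t\}$ and $\overline{\mathrm{VaR}}^w_t(X)=\inf\{x\in\mathbb R:w(X\ge x)<t\}$; $\mathrm{ES}^w_\alpha(X)=\frac1\alpha\int_0^\alpha\mathrm{VaR}^w_t(X)\,\mathrm dt$. $(y)_+=\max(y,0)$. *)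

theory Defs
  imports "HOL-Analysis.Analysis"
begin

definition capacity :: "'a measure \<Rightarrow> ('a set \<Rightarrow> real) \<Rightarrow> bool" where
  "capacity M w \<longleftrightarrow>
     (\<forall>A\<in>sets M. \<forall>B\<in>sets M. A \<subseteq> B \<longrightarrow> w A \<le> w B) \<and>
     w {} = 0 \<and> w (space M) = 1"

definition geset :: "'a measure \<Rightarrow> ('a \<Rightarrow> real) \<Rightarrow> real \<Rightarrow> 'a set" where
  "geset M Y y = {\<omega> \<in> space M. y \<le> Y \<omega>}"

definition choquet :: "'a measure \<Rightarrow> ('a set \<Rightarrow> real) \<Rightarrow> ('a \<Rightarrow> real) \<Rightarrow> real" where
  "choquet M w Y =
     integral {..0} (\<lambda>y. w (geset M Y y) - 1) + integral {0..} (\<lambda>y. w (geset M Y y))"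

definition VaR :: "'a measure \<Rightarrow> ('a set \<Rightarrow> real) \<Rightarrow> real \<Rightarrow> ('a \<Rightarrow> real) \<Rightarrow> real" where
  "VaR M w t X = Inf {x. w (geset M X x) \<le> t}"

definition VaR_upper :: "'a measure \<Rightarrow> ('a set \<Rightarrow> real) \<Rightarrow> real \<Rightarrow> ('a \<Rightarrow> real) \<Rightarrow> real" where
  "VaR_upper M w t X = Inf {x. w (geset M X x) < t}"

definition ES :: "'a measure \<Rightarrow> ('a set \<Rightarrow> real) \<Rightarrow> real \<Rightarrow> ('a \<Rightarrow> real) \<Rightarrow> real" where
  "ES M w \<alpha> X = (1 / \<alpha>) * integral {0..\<alpha>} (\<lambda>t. VaR M w t X)"

definition es_obj :: "'a measure \<Rightarrow> ('a set \<Rightarrow> real) \<Rightarrow> real \<Rightarrow> ('a \<Rightarrow> real) \<Rightarrow> real \<Rightarrow> real" where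
  "es_obj M w \<alpha> X x = x + (1 / \<alpha>) * choquet M w (\<lambda>\<omega>. max (X \<omega> - x) 0)"

end

theory Submission imports Defs "HOL-Analysis.Equivalence_Measurable_On_Borel" begin

lemma anti_on_integrable:
  fixes f :: "real \<Rightarrow> real"
  assumes "\<And>x y. c \<le> x \<Longrightarrow> x \<le> y \<Longrightarrow> y \<le> d \<Longrightarrow> f y \<le> f x"
  shows "f integrable_on {c..d}"
proof -
  have "mono_on {c..d} (\<lambda>s. - f s)" using assms by (auto simp: mono_on_def)
  then have "(\<lambda>s. - f s) integrable_on {c..d}" by (rule integrable_on_mono_on)
  then have "(\<lambda>s. - (- f s)) integrable_on {c..d}" by (rule integrable_neg)
  then show ?thesis by simp
qed

lemma int_upper:
  fixes f :: "real \<Rightarrow> real"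
  assumes "f integrable_on {x..y}" "x \<le> y" "\<And>s. s \<in> {x..y} \<Longrightarrow> f s \<le> c"
  shows "integral {x..y} f \<le> (y - x) * c"
proof -
  have "integral {x..y} f \<le> integral {x..y} (\<lambda>s. c)"
    using assms by (intro integral_le) auto
  then show ?thesis using assms by simp
qed

lemma int_lower:
  fixes f :: "real \<Rightarrow> real"
  assumes "f integrable_on {x..y}" "x \<le> y" "\<And>s. s \<in> {x..y} \<Longrightarrow> c \<le> f s"
  shows "(y - x) * c \<le> integral {x..y} f"
proof -
  have "integral {x..y} (\<lambda>s. c) \<le> integral {x..y} f"
    using assms by (intro integral_le) auto
  then show ?thesis using assms by simp
qed

lemma choquet_link:
  assumes cap: "capacity M w" and Xm: "X \<in> borel_measurable M"
    and B: "\<forall>\<omega>\<in>space M. \<bar>X \<omega>\<bar> \<le> B" and xK: "x \<le> K" and BK: "B \<le> K"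
  shows "choquet M w (\<lambda>\<omega>. max (X \<omega> - x) 0) = integral {x..K} (\<lambda>s. w (geset M X s))"
proof -
  define f where "f = (\<lambda>s. w (geset M X s))"
  define Y where "Y = (\<lambda>\<omega>. max (X \<omega> - x) 0)"
  have mono: "\<And>A B. A \<in> sets M \<Longrightarrow> B \<in> sets M \<Longrightarrow> A \<subseteq> B \<Longrightarrow> w A \<le> w B"
    and w0: "w {} = 0" and w1: "w (space M) = 1" using cap by (auto simp: capacity_def)
  have gs: "geset M X s \<in> sets M" for s unfolding geset_def using Xm by measurable
  have fanti: "s \<le> t \<Longrightarrow> f t \<le> f s" for s t
    unfolding f_def by (rule mono[OF gs gs]) (auto simp: geset_def)
  have Yneg: "geset M Y y = space M" if "y \<le> 0" for y
    using that by (auto simp: geset_def Y_def)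
  have Ypos: "geset M Y y = geset M X (x + y)" if "0 < y" for y
    using that by (auto simp: geset_def Y_def)
  have fbig: "f s = 0" if "B < s" for s
  proof -
    have "geset M X s = {}" using B that by (force simp: geset_def)
    then show ?thesis using w0 by (simp add: f_def)
  qed
  have first: "integral {..0} (\<lambda>y. w (geset M Y y) - 1) = 0"
  proof -
    have "integral {..0} (\<lambda>y. w (geset M Y y) - 1) = integral {..0} (\<lambda>y::real. 0::real)"
      by (rule integral_spike[of "{}"]) (auto simp: Yneg w1)
    then show ?thesis by simp
  qed
  have fi: "f integrable_on {x..K}" by (rule anti_on_integrable) (rule fanti)
  then have "(f has_integral integral {x..K} f) {x..K}" by (rule integrable_integral)
  then have "(f has_integral integral {x..K} f) {0+x..(K-x)+x}" by simp
  then have h1: "((f \<circ> (+) x) has_integral integral {x..K} f) {0..K-x}"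
    by (subst has_integral_shift_Icc_real)
  define h where "h = (\<lambda>y. if 0 \<le> y then w (geset M Y y) else 0)"
  have h2: "(h has_integral integral {x..K} f) {0..K-x}"
    by (rule has_integral_spike[OF _ _ h1, of "{0}"]) (auto simp: h_def Ypos f_def)
  have h3: "(h has_integral integral {x..K} f) {0..}"
  proof (rule has_integral_on_superset[OF h2])
    fix y assume "y \<notin> {0..K-x}"
    then consider "y < 0" | "K - x < y" by force
    then show "h y = 0"
    proof cases
      case 1 then show ?thesis by (simp add: h_def)
    next
      case 2
      then have "f (x + y) = 0" using BK by (intro fbig) linarith
      then show ?thesis using 2 xK by (simp add: h_def Ypos f_def)
    qed
  qed auto
  have "((\<lambda>y. w (geset M Y y)) has_integral integral {x..K} f) {0..}"
    using h3 by (subst has_integral_cong[of _ _ h]) (auto simp: h_def)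
  then have "integral {0..} (\<lambda>y. w (geset M Y y)) = integral {x..K} f"
    by (rule integral_unique)
  then show ?thesis using first unfolding choquet_def Y_def f_def by simp
qed

lemma fubini_part:
  fixes f V :: "real \<Rightarrow> real" and \<alpha> a K :: real
  assumes fanti: "\<And>s t. s \<le> t \<Longrightarrow> f t \<le> f s" and f0: "\<And>s. 0 \<le> f s"
    and fa: "\<And>s. a < s \<Longrightarrow> f s \<le> \<alpha>"
    and V1: "\<And>t. t \<in> {0..\<alpha>} \<Longrightarrow> a \<le> V t \<and> V t \<le> K"
    and V2: "\<And>t s. t \<in> {0..\<alpha>} \<Longrightarrow> s < V t \<Longrightarrow> t < f s"
    and V3: "\<And>t s. t \<in> {0..\<alpha>} \<Longrightarrow> t < f s \<Longrightarrow> s \<le> V t"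
    and Vanti: "\<And>t t'. 0 \<le> t \<Longrightarrow> t \<le> t' \<Longrightarrow> t' \<le> \<alpha> \<Longrightarrow> V t' \<le> V t"
    and apos: "0 < \<alpha>" and aK: "a \<le> K"
  shows "integral {0..\<alpha>} V = \<alpha> * a + integral {a..K} f"
proof -
  have "mono (\<lambda>s. - f s)" using fanti by (auto simp: mono_def)
  then have "(\<lambda>s. - f s) \<in> borel_measurable borel" by (rule borel_measurable_mono)
  then have fm[measurable]: "f \<in> borel_measurable borel"
    using borel_measurable_uminus[of "\<lambda>s. - f s"] by simp
  define G :: "real \<Rightarrow> real \<Rightarrow> ennreal" where
    "G = (\<lambda>t s. if 0 \<le> t \<and> t \<le> \<alpha> \<and> a \<le> s \<and> s \<le> K \<and> t < f s then 1 else 0)"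
  have meas: "case_prod G \<in> borel_measurable (lborel \<Otimes>\<^sub>M lborel)"
    unfolding G_def by measurable
  have inner_s: "(\<integral>\<^sup>+t. G t s \<partial>lborel) = ennreal (min \<alpha> (f s)) * indicator {a..K} s" for s
  proof (cases "s \<in> {a..K}")
    case False then show ?thesis by (auto simp: G_def)
  next
    case True
    show ?thesis
    proof (cases "f s \<le> \<alpha>")
      case le: True
      have "(\<integral>\<^sup>+t. G t s \<partial>lborel) = (\<integral>\<^sup>+t. indicator {0..<f s} t \<partial>lborel)"
        using True le by (intro nn_integral_cong) (auto simp: G_def indicator_def)
      also have "\<dots> = ennreal (f s)" using f0[of s] by simp
      finally show ?thesis using True le by simp
    next
      case gt: False
      have "(\<integral>\<^sup>+t. G t s \<partial>lborel) = (\<integral>\<^sup>+t. indicator {0..\<alpha>} t \<partial>lborel)"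
        using True gt by (intro nn_integral_cong) (auto simp: G_def indicator_def)
      also have "\<dots> = ennreal \<alpha>" using apos by simp
      finally show ?thesis using True gt by simp
    qed
  qed
  have inner_t: "(\<integral>\<^sup>+s. G t s \<partial>lborel) = ennreal (V t - a) * indicator {0..\<alpha>} t" for t
  proof (cases "t \<in> {0..\<alpha>}")
    case False then show ?thesis by (auto simp: G_def)
  next
    case True
    define S where "S = {s. a \<le> s \<and> s \<le> K \<and> t < f s}"
    have Sm: "S \<in> sets lborel" unfolding S_def by measurable
    have "(\<integral>\<^sup>+s. G t s \<partial>lborel) = (\<integral>\<^sup>+s. indicator S s \<partial>lborel)"
      using True by (intro nn_integral_cong) (auto simp: G_def indicator_def S_def)
    also have "\<dots> = emeasure lborel S" using Sm by simp
    also have "\<dots> = ennreal (V t - a)"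
    proof (rule antisym)
      have "S \<subseteq> {a..V t}" using V3[OF True] by (auto simp: S_def)
      then have "emeasure lborel S \<le> emeasure lborel {a..V t}" by (intro emeasure_mono) auto
      then show "emeasure lborel S \<le> ennreal (V t - a)" using V1[OF True] by simp
    next
      have "{a..<V t} \<subseteq> S" using V2[OF True] V1[OF True] by (auto simp: S_def)
      then have "emeasure lborel {a..<V t} \<le> emeasure lborel S" using Sm by (intro emeasure_mono) auto
      then show "ennreal (V t - a) \<le> emeasure lborel S" using V1[OF True] by simp
    qed
    finally show ?thesis using True by simp
  qed
  have mi: "(\<lambda>s. min \<alpha> (f s)) integrable_on {a..K}"
    by (rule anti_on_integrable) (use fanti in \<open>force simp: min_le_iff_disj\<close>)
  have Vi: "(\<lambda>t. V t - a) integrable_on {0..\<alpha>}"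
    by (rule anti_on_integrable) (use Vanti in auto)
  have "ennreal (integral {a..K} (\<lambda>s. min \<alpha> (f s))) = (\<integral>\<^sup>+s. ennreal (min \<alpha> (f s)) * indicator {a..K} s \<partial>lborel)"
    using f0 apos by (intro nn_integral_has_integral_lebesgue'[symmetric] integrable_integral mi) auto
  also have "\<dots> = (\<integral>\<^sup>+s. (\<integral>\<^sup>+t. G t s \<partial>lborel) \<partial>lborel)" by (simp add: inner_s)
  also have "\<dots> = (\<integral>\<^sup>+t. (\<integral>\<^sup>+s. G t s \<partial>lborel) \<partial>lborel)" by (rule lborel_pair.Fubini'[OF meas])
  also have "\<dots> = (\<integral>\<^sup>+t. ennreal (V t - a) * indicator {0..\<alpha>} t \<partial>lborel)" by (simp add: inner_t)
  also have "\<dots> = ennreal (integral {0..\<alpha>} (\<lambda>t. V t - a))"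
    using V1 by (intro nn_integral_has_integral_lebesgue' integrable_integral Vi) auto
  finally have e: "ennreal (integral {a..K} (\<lambda>s. min \<alpha> (f s))) = ennreal (integral {0..\<alpha>} (\<lambda>t. V t - a))" .
  have n1: "0 \<le> integral {a..K} (\<lambda>s. min \<alpha> (f s))"
    using f0 apos by (intro integral_nonneg mi) auto
  have n2: "0 \<le> integral {0..\<alpha>} (\<lambda>t. V t - a)"
    using V1 by (intro integral_nonneg Vi) auto
  have eq1: "integral {a..K} (\<lambda>s. min \<alpha> (f s)) = integral {0..\<alpha>} (\<lambda>t. V t - a)"
    using e n1 n2 by simp
  have eq2: "integral {a..K} (\<lambda>s. min \<alpha> (f s)) = integral {a..K} f"
    by (rule integral_spike[of "{a}"]) (auto intro!: min_absorb2[symmetric] fa)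
  have Vi': "V integrable_on {0..\<alpha>}"
    by (rule anti_on_integrable) (use Vanti in auto)
  have eq3: "integral {0..\<alpha>} (\<lambda>t. V t - a) = integral {0..\<alpha>} V - \<alpha> * a"
    using integral_diff[OF Vi' integrable_const_ivl[of a 0 \<alpha>]] apos by simp
  show ?thesis using eq1 eq2 eq3 by simp
qed

theorem theorem3:
  fixes M :: "'a measure" and w :: "'a set \<Rightarrow> real" and X :: "'a \<Rightarrow> real" and \<alpha> :: real
  assumes "capacity M w"
    and "X \<in> borel_measurable M"
    and "\<exists>B. \<forall>\<omega>\<in>space M. \<bar>X \<omega>\<bar> \<le> B"
    and "0 < \<alpha>" and "\<alpha> < 1"
  shows "{VaR M w \<alpha> X .. VaR_upper M w \<alpha> X} = {x. \<forall>y. es_obj M w \<alpha> X x \<le> es_obj M w \<alpha> X y}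
     \<and> ES M w \<alpha> X \<in> range (es_obj M w \<alpha> X)
     \<and> (\<forall>y. ES M w \<alpha> X \<le> es_obj M w \<alpha> X y)"
proof -
  note cap = assms(1) and Xm = assms(2) and apos = assms(4) and a1 = assms(5)
  obtain B where B: "\<forall>\<omega>\<in>space M. \<bar>X \<omega>\<bar> \<le> B" using assms(3) by blast
  define f where "f = (\<lambda>s. w (geset M X s))"
  have mono: "\<And>A B. A \<in> sets M \<Longrightarrow> B \<in> sets M \<Longrightarrow> A \<subseteq> B \<Longrightarrow> w A \<le> w B"
    and w0: "w {} = 0" and w1: "w (space M) = 1" using cap by (auto simp: capacity_def)
  have gs: "geset M X s \<in> sets M" for s unfolding geset_def using Xm by measurable
  have fanti: "f t \<le> f s" if "s \<le> t" for s t
    unfolding f_def by (rule mono[OF gs gs]) (use that in \<open>auto simp: geset_def\<close>)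
  have f0: "0 \<le> f s" for s
    using mono[OF _ gs, of "{}"] w0 by (simp add: f_def)
  have fsmall: "f s = 1" if "s \<le> - B" for s
  proof -
    have "geset M X s = space M" using B that by (force simp: geset_def)
    then show ?thesis using w1 by (simp add: f_def)
  qed
  have fbig: "f s = 0" if "B < s" for s
  proof -
    have "geset M X s = {}" using B that by (force simp: geset_def)
    then show ?thesis using w0 by (simp add: f_def)
  qed
  have fi: "f integrable_on {c..d}" for c d by (rule anti_on_integrable) (rule fanti)
  define V where "V = (\<lambda>t. VaR M w t X)"
  have V_eq: "V t = Inf {x. f x \<le> t}" for t by (simp add: V_def VaR_def f_def)
  have Lne: "B + 1 \<in> {x. f x \<le> t}" if "0 \<le> t" for t using fbig[of "B+1"] that by simp
  have Lbdd: "bdd_below {x. f x \<le> t}" if "t < 1" for t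
  proof (rule bdd_belowI)
    fix x assume "x \<in> {x. f x \<le> t}"
    then show "- B \<le> x" using fsmall[of x] that by force
  qed
  have Vlow: "t < f s" if "0 \<le> t" "t < 1" "s < V t" for s t
  proof (rule ccontr)
    assume "\<not> t < f s"
    then have "V t \<le> s" unfolding V_eq by (intro cInf_lower Lbdd that) auto
    then show False using that by simp
  qed
  have Vup: "s \<le> V t" if "0 \<le> t" "t < f s" for s t
    unfolding V_eq
  proof (rule cInf_greatest)
    show "{x. f x \<le> t} \<noteq> {}" using Lne[OF that(1)] by blast
    fix e assume "e \<in> {x. f x \<le> t}"
    then show "s \<le> e" using fanti[of e s] that by force
  qed
  have Vle: "V t \<le> B + 1" if "0 \<le> t" "t < 1" for t
    unfolding V_eq by (intro cInf_lower Lbdd Lne that)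
  have Vanti: "V t' \<le> V t" if "0 \<le> t" "t \<le> t'" "t' < 1" for t t'
    unfolding V_eq
  proof (rule cInf_superset_mono)
    show "{x. f x \<le> t} \<noteq> {}" using Lne[OF that(1)] by blast
    show "bdd_below {x. f x \<le> t'}" using that by (intro Lbdd)
    show "{x. f x \<le> t} \<subseteq> {x. f x \<le> t'}" using that by auto
  qed
  define a where "a = V \<alpha>"
  define b where "b = VaR_upper M w \<alpha> X"
  have b_eq: "b = Inf {x. f x < \<alpha>}" by (simp add: b_def VaR_upper_def f_def)
  have Une: "{x. f x < \<alpha>} \<noteq> {}"
  proof -
    have "B + 1 \<in> {x. f x < \<alpha>}" using fbig[of "B+1"] apos by simp
    then show ?thesis by blast
  qed
  have Ubdd: "bdd_below {x. f x < \<alpha>}"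
  proof (rule bdd_belowI)
    fix x assume "x \<in> {x. f x < \<alpha>}"
    then show "- B \<le> x" using fsmall[of x] a1 by force
  qed
  have fa: "f s \<le> \<alpha>" if "a < s" for s
  proof -
    have "\<exists>e\<in>{x. f x \<le> \<alpha>}. e < s"
      using that unfolding a_def V_eq
      by (subst cInf_less_iff[symmetric]) (use Lne[of \<alpha>] apos Lbdd[OF a1] in auto)
    then obtain e where "f e \<le> \<alpha>" "e < s" by auto
    then show ?thesis using fanti[of e s] by simp
  qed
  have P1: "\<alpha> < f s" if "s < a" for s using Vlow[of \<alpha> s] that apos a1 by (simp add: a_def)
  have P3: "\<alpha> \<le> f s" if "s < b" for s
  proof (rule ccontr)
    assume "\<not> \<alpha> \<le> f s"
    then have "b \<le> s" unfolding b_eq by (intro cInf_lower Ubdd) auto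
    then show False using that by simp
  qed
  have P4: "f s < \<alpha>" if "b < s" for s
  proof -
    have "\<exists>e\<in>{x. f x < \<alpha>}. e < s"
      using that unfolding b_eq by (subst cInf_less_iff[symmetric]) (use Une Ubdd in auto)
    then obtain e where "f e < \<alpha>" "e < s" by auto
    then show ?thesis using fanti[of e s] by simp
  qed
  have ab: "a \<le> b" unfolding a_def V_eq b_eq
    by (rule cInf_superset_mono) (use Une Lbdd[OF a1] in auto)
  define \<phi> where "\<phi> = es_obj M w \<alpha> X"
  have phi_eq: "\<phi> x = x + (1 / \<alpha>) * integral {x..K} f" if "x \<le> K" "B \<le> K" for x K
    unfolding \<phi>_def es_obj_def f_def using choquet_link[OF cap Xm B that] by simp
  have D: "\<phi> y - \<phi> x = (y - x) - (1 / \<alpha>) * integral {x..y} f" if "x \<le> y" for x y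
  proof -
    define K where "K = max B y"
    have "integral {x..y} f + integral {y..K} f = integral {x..K} f"
      using that by (intro Henstock_Kurzweil_Integration.integral_combine fi) (auto simp: K_def)
    moreover have "\<phi> x = x + (1 / \<alpha>) * integral {x..K} f" using that by (intro phi_eq) (auto simp: K_def)
    moreover have "\<phi> y = y + (1 / \<alpha>) * integral {y..K} f" by (intro phi_eq) (auto simp: K_def)
    ultimately show ?thesis by (simp add: algebra_simps add_divide_distrib[symmetric])
  qed
  have minfi: "(\<lambda>s. min \<alpha> (f s)) integrable_on {c..d}" for c d
    by (rule anti_on_integrable) (use fanti in \<open>force simp: min_le_iff_disj\<close>)
  have maxfi: "(\<lambda>s. max \<alpha> (f s)) integrable_on {c..d}" for c d
    by (rule anti_on_integrable) (use fanti in \<open>force simp: le_max_iff_disj\<close>)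
  have argmin: "{a..b} = {x. \<forall>y. \<phi> x \<le> \<phi> y}"
  proof (intro set_eqI iffI)
    fix x assume x: "x \<in> {a..b}"
    show "x \<in> {x. \<forall>y. \<phi> x \<le> \<phi> y}"
    proof (intro CollectI allI)
      fix y
      show "\<phi> x \<le> \<phi> y"
      proof (cases "x \<le> y")
        case True
        have "integral {x..y} f = integral {x..y} (\<lambda>s. min \<alpha> (f s))"
          by (rule integral_spike[of "{x}"]) (use x in \<open>auto intro!: min_absorb2 fa\<close>)
        also have "\<dots> \<le> (y - x) * \<alpha>" using True by (intro int_upper minfi) auto
        finally have "integral {x..y} f / \<alpha> \<le> y - x" using apos by (simp add: divide_le_eq)
        then show ?thesis using D[OF True] by simp
      next
        case False
        then have yx: "y \<le> x" by simp
        have "integral {y..x} f = integral {y..x} (\<lambda>s. max \<alpha> (f s))"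
          by (rule integral_spike[of "{x}"]) (use x in \<open>auto intro!: max_absorb2 P3\<close>)
        also have "\<dots> \<ge> (x - y) * \<alpha>" using yx by (intro int_lower maxfi) auto
        finally have "x - y \<le> integral {y..x} f / \<alpha>" using apos by (simp add: le_divide_eq)
        then show ?thesis using D[OF yx] by simp
      qed
    qed
  next
    fix x assume "x \<in> {x. \<forall>y. \<phi> x \<le> \<phi> y}"
    then have xm: "\<phi> x \<le> \<phi> y" for y by simp
    have "a \<le> x"
    proof (rule ccontr)
      assume "\<not> a \<le> x"
      define y where "y = (x + a) / 2"
      have xy: "x < y" "y < a" using \<open>\<not> a \<le> x\<close> by (auto simp: y_def)
      have "(y - x) * f y \<le> integral {x..y} f" using xy by (intro int_lower fi) (auto intro: fanti)
      moreover have "(y - x) * \<alpha> < (y - x) * f y" using xy P1[of y] by (intro mult_strict_left_mono) auto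
      ultimately have "y - x < integral {x..y} f / \<alpha>" using apos by (simp add: less_divide_eq)
      then have "\<phi> y < \<phi> x" using D[of x y] xy by simp
      then show False using xm[of y] by simp
    qed
    moreover have "x \<le> b"
    proof (rule ccontr)
      assume "\<not> x \<le> b"
      define y where "y = (x + b) / 2"
      have xy: "y < x" "b < y" using \<open>\<not> x \<le> b\<close> by (auto simp: y_def)
      have "integral {y..x} f \<le> (x - y) * f y" using xy by (intro int_upper fi) (auto intro: fanti)
      moreover have "(x - y) * f y < (x - y) * \<alpha>" using xy P4[of y] by (intro mult_strict_left_mono) auto
      ultimately have "integral {y..x} f / \<alpha> < x - y" using apos by (simp add: divide_less_eq)
      then have "\<phi> y < \<phi> x" using D[of y x] xy by simp
      then show False using xm[of y] by simp
    qed
    ultimately show "x \<in> {a..b}" by simp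
  qed
  have Vint: "integral {0..\<alpha>} V = \<alpha> * a + integral {a..B+1} f"
  proof (rule fubini_part)
    show "\<And>s t. s \<le> t \<Longrightarrow> f t \<le> f s" by (rule fanti)
    show "\<And>s. 0 \<le> f s" by (rule f0)
    show "\<And>s. a < s \<Longrightarrow> f s \<le> \<alpha>" by (rule fa)
    show "a \<le> V t \<and> V t \<le> B + 1" if "t \<in> {0..\<alpha>}" for t
      using that a1 Vanti[of t \<alpha>] Vle[of t] by (auto simp: a_def)
    show "t < f s" if "t \<in> {0..\<alpha>}" "s < V t" for t s using that a1 by (intro Vlow) auto
    show "s \<le> V t" if "t \<in> {0..\<alpha>}" "t < f s" for t s using that by (intro Vup) auto
    show "V t' \<le> V t" if "0 \<le> t" "t \<le> t'" "t' \<le> \<alpha>" for t t' using that a1 by (intro Vanti) auto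
    show "0 < \<alpha>" by (rule apos)
    show "a \<le> B + 1" using Vle[of \<alpha>] apos a1 by (simp add: a_def)
  qed
  have ES_eq: "ES M w \<alpha> X = \<phi> a"
  proof -
    have "\<phi> a = a + (1 / \<alpha>) * integral {a..B+1} f"
      using Vle[of \<alpha>] apos a1 by (intro phi_eq) (auto simp: a_def)
    moreover have "ES M w \<alpha> X = (1 / \<alpha>) * (\<alpha> * a + integral {a..B+1} f)"
      unfolding ES_def using Vint by (simp add: V_def)
    ultimately have "\<alpha> * ES M w \<alpha> X = \<alpha> * \<phi> a" using apos by (simp add: field_simps)
    then show ?thesis using apos by simp
  qed
  have amin: "a \<in> {x. \<forall>y. \<phi> x \<le> \<phi> y}" using argmin ab by auto
  show ?thesis
    using argmin ES_eq amin unfolding a_def V_def b_def \<phi>_def by auto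
qed

end
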